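(* Consider any single round of Algorithm 2 on a connected graph $G$ with nonnegative integer loads, and let $L_{max},L_{min}$ be the maximum and minimum loads at the beginning of the round. Then: (1) if node $u$ transferred load to node $v$ in this round, then at the end of the round $load(v)\le load(u)$; (2) every node whose load strictly decreases in the round ends with load strictly greater than $L_{min}$, and every node whose load strictly increases ends with load strictly less than $L_{max}$; consequently Algorithm 2 is monotonic.
   Context: $G=(V,E)$ is an undirected connected graph; each node $u$ holds an integer load $load(u)\ge 0$. Algorithm 2 (single proposal, discrete) proceeds in synchronous rounds; in each round, using the loads at the start of the round: (1) every node $u$ having at least one neighbor $v$ with $load(v)\le load(u)-2$ picks the first neighbor $v$ (in a fixed order of its neighbors) maximizing $load(u)-load(v)$ and sends $v$ a proposal of value $p_{uv}=\lfloor (load(u)-load(v))/2\rfloor$; (2) every node that received at least one proposal accepts exactly one proposal of maximum value; (3) all accepted transfers are executed simultaneously (each accepted proposal $p_{wu}$ moves $p_{wu}$ from $w$ to $u$), and nodes report their new loads to neighbors. An algorithm is monotonic if in every execution (a) each load transfer goes from a higher-loaded node to a less-loaded one, and (b) the maximum load never increases and the minimum load never decreases. *)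

theory Defs
  imports Main
begin

text \<open>Graph: vertex set V, symmetric irreflexive adjacency E on V, connected;
  nb u is the fixed order of the neighbours of u.\<close>
definition graph_ok :: "'a set \<Rightarrow> ('a \<Rightarrow> 'a \<Rightarrow> bool) \<Rightarrow> ('a \<Rightarrow> 'a list) \<Rightarrow> bool" where
  "graph_ok V E nb \<longleftrightarrow> finite V \<and> V \<noteq> {} \<and>
     (\<forall>u v. E u v \<longrightarrow> u \<in> V \<and> v \<in> V \<and> u \<noteq> v \<and> E v u) \<and>
     (\<forall>u\<in>V. distinct (nb u) \<and> set (nb u) = {v. E u v}) \<and>
     (\<forall>u\<in>V. \<forall>v\<in>V. (u, v) \<in> {(x, y). E x y}\<^sup>*)"

definition has_prop :: "('a \<Rightarrow> 'a list) \<Rightarrow> ('a \<Rightarrow> int) \<Rightarrow> 'a \<Rightarrow> bool" where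
  "has_prop nb L u \<longleftrightarrow> (\<exists>v\<in>set (nb u). L v \<le> L u - 2)"

definition ptarget :: "('a \<Rightarrow> 'a list) \<Rightarrow> ('a \<Rightarrow> int) \<Rightarrow> 'a \<Rightarrow> 'a" where
  "ptarget nb L u = hd (filter (\<lambda>v. \<forall>w\<in>set (nb u). L u - L w \<le> L u - L v) (nb u))"

definition proposes :: "('a \<Rightarrow> 'a list) \<Rightarrow> ('a \<Rightarrow> int) \<Rightarrow> 'a \<Rightarrow> 'a \<Rightarrow> bool" where
  "proposes nb L u v \<longleftrightarrow> has_prop nb L u \<and> v = ptarget nb L u"

text \<open>Proposal value floor((load u - load v)/2) (int div is floor division).\<close>
definition pval :: "('a \<Rightarrow> int) \<Rightarrow> 'a \<Rightarrow> 'a \<Rightarrow> int" where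
  "pval L u v = (L u - L v) div 2"

text \<open>acc v = Some w: v accepts the proposal of w; acc v = None: v accepts nothing.
  Every node receiving a proposal accepts exactly one of maximum value (ties arbitrary).\<close>
definition valid_acc :: "'a set \<Rightarrow> ('a \<Rightarrow> 'a list) \<Rightarrow> ('a \<Rightarrow> int) \<Rightarrow> ('a \<Rightarrow> 'a option) \<Rightarrow> bool" where
  "valid_acc V nb L acc \<longleftrightarrow>
     (\<forall>v. v \<notin> V \<longrightarrow> acc v = None) \<and>
     (\<forall>v\<in>V. (acc v = None \<longleftrightarrow> \<not> (\<exists>w\<in>V. proposes nb L w v)) \<and>
        (\<forall>w. acc v = Some w \<longrightarrow> w \<in> V \<and> proposes nb L w v \<and>
              (\<forall>w'\<in>V. proposes nb L w' v \<longrightarrow> pval L w' v \<le> pval L w v)))"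

definition new_load :: "'a set \<Rightarrow> ('a \<Rightarrow> 'a list) \<Rightarrow> ('a \<Rightarrow> int) \<Rightarrow> ('a \<Rightarrow> 'a option) \<Rightarrow> 'a \<Rightarrow> int" where
  "new_load V nb L acc u =
     L u - (if \<exists>v\<in>V. acc v = Some u then pval L u (ptarget nb L u) else 0)
         + (case acc u of None \<Rightarrow> 0 | Some w \<Rightarrow> pval L w u)"

definition monotonic :: "'a set \<Rightarrow> ('a \<Rightarrow> 'a list) \<Rightarrow> bool" where
  "monotonic V nb \<longleftrightarrow>
     (\<forall>(Ls :: nat \<Rightarrow> 'a \<Rightarrow> int) (As :: nat \<Rightarrow> 'a \<Rightarrow> 'a option).
        (\<forall>u\<in>V. 0 \<le> Ls 0 u) \<and>
        (\<forall>i. valid_acc V nb (Ls i) (As i) \<and> Ls (Suc i) = new_load V nb (Ls i) (As i))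
        \<longrightarrow> (\<forall>i. \<forall>u\<in>V. \<forall>v\<in>V. As i v = Some u \<longrightarrow> Ls i v < Ls i u) \<and>
            (\<forall>i. Max (Ls (Suc i) ` V) \<le> Max (Ls i ` V) \<and> Min (Ls i ` V) \<le> Min (Ls (Suc i) ` V)))"

end

theory Submission
  imports Defs
begin

lemma pt_facts:
  assumes "has_prop nb L u"
  shows "ptarget nb L u \<in> set (nb u) \<and> L (ptarget nb L u) \<le> L u - 2"
proof -
  obtain v0 where v0: "v0 \<in> set (nb u)" "L v0 \<le> L u - 2" using assms unfolding has_prop_def by blast
  let ?S = "L ` set (nb u)"
  have fin: "finite ?S" "?S \<noteq> {}" using v0 by auto
  obtain m where m: "m \<in> set (nb u)" "L m = Min ?S" using Min_in[OF fin] by auto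
  have mmin: "\<forall>w\<in>set (nb u). L u - L w \<le> L u - L m" using m fin by auto
  let ?F = "filter (\<lambda>v. \<forall>w\<in>set (nb u). L u - L w \<le> L u - L v) (nb u)"
  have ne: "?F \<noteq> []" using m(1) mmin by (simp add: filter_empty_conv) blast
  hence "hd ?F \<in> set ?F" by (rule hd_in_set)
  hence h: "hd ?F \<in> set (nb u)" "\<forall>w\<in>set (nb u). L u - L w \<le> L u - L (hd ?F)" by auto
  from h(2) v0 have "L (hd ?F) \<le> L v0" by fastforce
  with h v0 show ?thesis unfolding ptarget_def by auto
qed

lemma prop_facts:
  assumes "proposes nb L w v"
  shows "v = ptarget nb L w \<and> v \<in> set (nb w) \<and> L v \<le> L w - 2"
  using assms pt_facts[of nb L w] unfolding proposes_def by auto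

lemma core:
  assumes g: "graph_ok V E nb" and a: "valid_acc V nb L acc" and x: "x \<in> V"
  shows "(new_load V nb L acc x < L x \<longrightarrow> (\<exists>t\<in>V. L t < new_load V nb L acc x))
       \<and> (L x < new_load V nb L acc x \<longrightarrow> (\<exists>w\<in>V. new_load V nb L acc x < L w))
       \<and> (\<forall>v\<in>V. acc v = Some x \<longrightarrow> new_load V nb L acc v \<le> new_load V nb L acc x)
       \<and> (\<forall>v\<in>V. acc v = Some x \<longrightarrow> L v < L x)"
proof -
  have nbV: "\<And>u v. u \<in> V \<Longrightarrow> v \<in> set (nb u) \<Longrightarrow> v \<in> V" using g unfolding graph_ok_def by blast
  define S where "S = (if \<exists>v\<in>V. acc v = Some x then pval L x (ptarget nb L x) else 0)"
  define R where "R = (case acc x of None \<Rightarrow> 0 | Some w \<Rightarrow> pval L w x)"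
  have nl: "new_load V nb L acc x = L x - S + R" unfolding new_load_def S_def R_def by simp
  have recv: "\<And>v w. v \<in> V \<Longrightarrow> acc v = Some w \<Longrightarrow> w \<in> V \<and> proposes nb L w v" using a unfolding valid_acc_def by blast
  have R0: "R \<ge> 0"
  proof (cases "acc x")
    case (Some w) then have "proposes nb L w x" using recv x by blast
    then have "L x \<le> L w - 2" using prop_facts[of nb L] by blast
    then show ?thesis using Some unfolding R_def pval_def by simp
  qed (simp add: R_def)
  have Rb: "R > 0 \<Longrightarrow> \<exists>w\<in>V. L x + R \<le> L w - 1"
  proof (cases "acc x")
    case (Some w) then have "proposes nb L w x" "w \<in> V" using recv x by blast+
    then have "L x \<le> L w - 2" using prop_facts[of nb L] by blast
    then show ?thesis using Some \<open>w\<in>V\<close> unfolding R_def pval_def by (intro bexI[of _ w]) auto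
  qed (simp add: R_def)
  have Sb: "S > 0 \<Longrightarrow> \<exists>t\<in>V. L t + 1 \<le> L x - S"
  proof -
    assume "S > 0"
    then obtain v where v: "v \<in> V" "acc v = Some x" unfolding S_def by (auto split: if_splits)
    then have "proposes nb L x v" using recv by blast
    then have "v = ptarget nb L x" "L v \<le> L x - 2" using prop_facts[of nb L] by blast+
    then show ?thesis using v \<open>S>0\<close> unfolding S_def pval_def by (intro bexI[of _ v]) auto
  qed
  have S0: "S \<ge> 0"
  proof (cases "\<exists>v\<in>V. acc v = Some x")
    case True
    then obtain v where v: "v \<in> V" "acc v = Some x" by blast
    then have "proposes nb L x v" using recv by blast
    then have "v = ptarget nb L x" "L v \<le> L x - 2" using prop_facts[of nb L] by blast+
    then show ?thesis using True unfolding S_def pval_def by auto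
  qed (simp add: S_def)
  have 1: "new_load V nb L acc x < L x \<longrightarrow> (\<exists>t\<in>V. L t < new_load V nb L acc x)"
  proof
    assume "new_load V nb L acc x < L x"
    then have "S > 0" using nl R0 by simp
    then obtain t where "t \<in> V" "L t + 1 \<le> L x - S" using Sb by blast
    then show "\<exists>t\<in>V. L t < new_load V nb L acc x" using nl R0 by (intro bexI[of _ t]) auto
  qed
  have 2: "L x < new_load V nb L acc x \<longrightarrow> (\<exists>w\<in>V. new_load V nb L acc x < L w)"
  proof
    assume "L x < new_load V nb L acc x"
    then have "R > 0" using nl S0 by simp
    then obtain w where "w \<in> V" "L x + R \<le> L w - 1" using Rb by blast
    then show "\<exists>w\<in>V. new_load V nb L acc x < L w" using nl S0 by (intro bexI[of _ w]) auto
  qed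
  have 3: "\<forall>v\<in>V. acc v = Some x \<longrightarrow> new_load V nb L acc v \<le> new_load V nb L acc x \<and> L v < L x"
  proof (intro ballI impI)
    fix v assume v: "v \<in> V" "acc v = Some x"
    then have "proposes nb L x v" using recv by blast
    then have pv: "v = ptarget nb L x" "L v \<le> L x - 2" using prop_facts[of nb L] by blast+
    have Sx: "S = pval L x v" using v pv unfolding S_def by auto
    define Sv where "Sv = (if \<exists>u\<in>V. acc u = Some v then pval L v (ptarget nb L v) else 0)"
    have Sv0: "Sv \<ge> 0"
    proof (cases "\<exists>u\<in>V. acc u = Some v")
      case True
      then obtain u where u: "u \<in> V" "acc u = Some v" by blast
      then have "proposes nb L v u" using recv by blast
      then have "u = ptarget nb L v" "L u \<le> L v - 2" using prop_facts[of nb L] by blast+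
      then show ?thesis using True unfolding Sv_def pval_def by auto
    qed (simp add: Sv_def)
    have "new_load V nb L acc v = L v - Sv + pval L x v" unfolding new_load_def Sv_def using v by simp
    moreover have "2 * pval L x v \<le> L x - L v" unfolding pval_def by simp
    ultimately show "new_load V nb L acc v \<le> new_load V nb L acc x \<and> L v < L x"
      using nl Sx R0 Sv0 pv by simp
  qed
  show ?thesis using 1 2 3 by blast
qed

theorem lemma6:
  fixes V :: "'a set" and E :: "'a \<Rightarrow> 'a \<Rightarrow> bool" and nb :: "'a \<Rightarrow> 'a list"
    and L :: "'a \<Rightarrow> int" and acc :: "'a \<Rightarrow> 'a option"
  assumes "graph_ok V E nb"
    and "\<forall>u\<in>V. 0 \<le> L u"
    and "valid_acc V nb L acc"
  shows "(\<forall>u\<in>V. \<forall>v\<in>V. acc v = Some u \<longrightarrow> new_load V nb L acc v \<le> new_load V nb L acc u)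
       \<and> (\<forall>x\<in>V. new_load V nb L acc x < L x \<longrightarrow> Min (L ` V) < new_load V nb L acc x)
       \<and> (\<forall>x\<in>V. L x < new_load V nb L acc x \<longrightarrow> new_load V nb L acc x < Max (L ` V))
       \<and> monotonic V nb"
proof -
  have fin: "finite V" "V \<noteq> {}" using assms(1) unfolding graph_ok_def by auto
  have gen: "\<And>L' acc'. valid_acc V nb L' acc' \<Longrightarrow>
      (\<forall>x\<in>V. new_load V nb L' acc' x < L' x \<longrightarrow> Min (L' ` V) < new_load V nb L' acc' x)
    \<and> (\<forall>x\<in>V. L' x < new_load V nb L' acc' x \<longrightarrow> new_load V nb L' acc' x < Max (L' ` V))"
  proof -
    fix L' acc' assume va: "valid_acc V nb L' acc'"
    show "?thesis L' acc'"
    proof (intro conjI ballI impI)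
      fix x assume "x \<in> V" "new_load V nb L' acc' x < L' x"
      then obtain t where "t \<in> V" "L' t < new_load V nb L' acc' x" using core[OF assms(1) va] by blast
      moreover have "Min (L' ` V) \<le> L' t" using \<open>t\<in>V\<close> fin by simp
      ultimately show "Min (L' ` V) < new_load V nb L' acc' x" by simp
    next
      fix x assume "x \<in> V" "L' x < new_load V nb L' acc' x"
      then obtain t where "t \<in> V" "new_load V nb L' acc' x < L' t" using core[OF assms(1) va] by blast
      moreover have "L' t \<le> Max (L' ` V)" using \<open>t\<in>V\<close> fin by simp
      ultimately show "new_load V nb L' acc' x < Max (L' ` V)" by simp
    qed
  qed
  have mono: "monotonic V nb"
    unfolding monotonic_def
  proof (intro allI impI)
    fix Ls :: "nat \<Rightarrow> 'a \<Rightarrow> int" and As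
    assume h: "(\<forall>u\<in>V. 0 \<le> Ls 0 u) \<and> (\<forall>i. valid_acc V nb (Ls i) (As i) \<and> Ls (Suc i) = new_load V nb (Ls i) (As i))"
    have A: "\<forall>i. \<forall>u\<in>V. \<forall>v\<in>V. As i v = Some u \<longrightarrow> Ls i v < Ls i u"
      using core[OF assms(1)] h by blast
    have B: "\<And>i. Max (Ls (Suc i) ` V) \<le> Max (Ls i ` V) \<and> Min (Ls i ` V) \<le> Min (Ls (Suc i) ` V)"
    proof
      fix i
    have va: "valid_acc V nb (Ls i) (As i)" and eq: "Ls (Suc i) = new_load V nb (Ls i) (As i)" using h by auto
    note G = gen[OF va]
    have "\<forall>x\<in>V. Ls (Suc i) x \<le> Max (Ls i ` V)"
    proof
      fix x assume x: "x \<in> V"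
      have "Ls i x \<le> Max (Ls i ` V)" using x fin by simp
      then show "Ls (Suc i) x \<le> Max (Ls i ` V)" using G x eq by force
    qed
    then show "Max (Ls (Suc i) ` V) \<le> Max (Ls i ` V)" using fin by simp
    next
      fix i
    have va: "valid_acc V nb (Ls i) (As i)" and eq: "Ls (Suc i) = new_load V nb (Ls i) (As i)" using h by auto
    note G = gen[OF va]
    have "\<forall>x\<in>V. Min (Ls i ` V) \<le> Ls (Suc i) x"
    proof
      fix x assume x: "x \<in> V"
      have "Min (Ls i ` V) \<le> Ls i x" using x fin by simp
      then show "Min (Ls i ` V) \<le> Ls (Suc i) x" using G x eq by force
    qed
    then show "Min (Ls i ` V) \<le> Min (Ls (Suc i) ` V)" using fin by simp
    qed
    show "(\<forall>i. \<forall>u\<in>V. \<forall>v\<in>V. As i v = Some u \<longrightarrow> Ls i v < Ls i u) \<and>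
            (\<forall>i. Max (Ls (Suc i) ` V) \<le> Max (Ls i ` V) \<and> Min (Ls i ` V) \<le> Min (Ls (Suc i) ` V))"
      using A B by blast
  qed
  show ?thesis using core[OF assms(1) assms(3)] gen[OF assms(3)] mono by blast
qed

end
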